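(* Let $C_0>0$ and $\mathcal{U}_0=e^{C_0}/(1+e^{C_0})^2$. For $m\in\mathcal{M}$, let $$\hat f_m=\arg\min_{t\in \mathcal{S}_m\cap \mathbb{L}_\infty(C_0)}\gamma_n(t),\qquad f_m=\arg\min_{t\in \mathcal{S}_m\cap \mathbb{L}_\infty(C_0)}\gamma(t).$$ Then $$\mathbb{E}_{f_0}\big[\mathcal{K}(\mathbb{P}_{f_0}^{(n)},\mathbb{P}_{\hat f_m}^{(n)})\big]\le \mathcal{K}(\mathbb{P}_{f_0}^{(n)},\mathbb{P}_{f_m}^{(n)})+\frac{D_m}{2n\,\mathcal{U}_0^2}.$$
   Context: Observations $(Y_1,x_1),\dots,(Y_n,x_n)\in\{0,1\}\times\mathcal{X}$ with deterministic design points $x_i$ and independent $Y_i$ satisfying $\mathbb{E}_{f_0}(Y_i)=\pi_{f_0}(x_i)$, where for a function $f:\mathcal{X}\to\mathbb{R}$, $\pi_f(x)=e^{f(x)}/(1+e^{f(x)})$, and $f_0$ is an unknown function. $\mathbb{P}^{(n)}_f$ denotes the law of $(Y_1,\dots,Y_n)$ when $Y_i$ are independent Bernoulli$(\pi_f(x_i))$. The contrast is $\gamma_n(f)=\frac1n\sum_{i=1}^n\{\log(1+e^{f(x_i)})-Y_if(x_i)\}$ and $\gamma(f)=\mathbb{E}_{f_0}[\gamma_n(f)]$. The normalized Kullback–Leibler divergence is $\mathcal{K}(\mathbb{P}_{f_0}^{(n)},\mathbb{P}_{f}^{(n)})=\frac1n\sum_{i=1}^n\big[\pi_{f_0}(x_i)\log\frac{\pi_{f_0}(x_i)}{\pi_f(x_i)}+(1-\pi_{f_0}(x_i))\log\frac{1-\pi_{f_0}(x_i)}{1-\pi_f(x_i)}\big]$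 $(=\gamma(f)-\gamma(f_0))$. A dictionary $\{\phi_1,\dots,\phi_M\}$ of functions $\mathcal{X}\to\mathbb{R}$, orthonormal for the empirical inner product $\langle f,g\rangle_n=\frac1n\sum_{i}f(x_i)g(x_i)$, is fixed; $\mathcal{M}$ is the set of subsets $m\subset\{1,\dots,M\}$, $\mathcal{S}_m=\{\sum_{j\in m}\beta_j\phi_j\}$ and $D_m$ is the dimension of $\mathrm{span}\{\phi_j,j\in m\}$. For $C_0>0$, $\mathbb{L}_\infty(C_0)=\{f:\mathcal{X}\to\mathbb{R}:\max_{1\le i\le n}|f(x_i)|\le C_0\}$. *)

theory Defs
  imports "HOL-Analysis.Analysis" "HOL-Library.Function_Algebras"
begin

definition pi_l :: "real \<Rightarrow> real" where
  "pi_l t = exp t / (1 + exp t)"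

definition outcomes :: "nat \<Rightarrow> (nat \<Rightarrow> real) set" where
  "outcomes n = PiE {..<n} (\<lambda>_. {0, 1})"

definition probY :: "nat \<Rightarrow> (nat \<Rightarrow> 'x) \<Rightarrow> ('x \<Rightarrow> real) \<Rightarrow> (nat \<Rightarrow> real) \<Rightarrow> real" where
  "probY n x f Y = (\<Prod>i<n. if Y i = 1 then pi_l (f (x i)) else 1 - pi_l (f (x i)))"

definition expect :: "nat \<Rightarrow> (nat \<Rightarrow> 'x) \<Rightarrow> ('x \<Rightarrow> real) \<Rightarrow> ((nat \<Rightarrow> real) \<Rightarrow> real) \<Rightarrow> real" where
  "expect n x f Z = (\<Sum>Y\<in>outcomes n. probY n x f Y * Z Y)"

definition gamma_n :: "nat \<Rightarrow> (nat \<Rightarrow> 'x) \<Rightarrow> (nat \<Rightarrow> real) \<Rightarrow> ('x \<Rightarrow> real) \<Rightarrow> real" where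
  "gamma_n n x Y f = (1 / real n) * (\<Sum>i<n. ln (1 + exp (f (x i))) - Y i * f (x i))"

definition gamma :: "nat \<Rightarrow> (nat \<Rightarrow> 'x) \<Rightarrow> ('x \<Rightarrow> real) \<Rightarrow> ('x \<Rightarrow> real) \<Rightarrow> real" where
  "gamma n x f0 f = expect n x f0 (\<lambda>Y. gamma_n n x Y f)"

definition KL :: "nat \<Rightarrow> (nat \<Rightarrow> 'x) \<Rightarrow> ('x \<Rightarrow> real) \<Rightarrow> ('x \<Rightarrow> real) \<Rightarrow> real" where
  "KL n x f0 f = (1 / real n) * (\<Sum>i<n.
      pi_l (f0 (x i)) * ln (pi_l (f0 (x i)) / pi_l (f (x i)))
    + (1 - pi_l (f0 (x i))) * ln ((1 - pi_l (f0 (x i))) / (1 - pi_l (f (x i)))))"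

definition inner_n :: "nat \<Rightarrow> (nat \<Rightarrow> 'x) \<Rightarrow> ('x \<Rightarrow> real) \<Rightarrow> ('x \<Rightarrow> real) \<Rightarrow> real" where
  "inner_n n x f g = (1 / real n) * (\<Sum>i<n. f (x i) * g (x i))"

definition S_m :: "(nat \<Rightarrow> 'x \<Rightarrow> real) \<Rightarrow> nat set \<Rightarrow> ('x \<Rightarrow> real) set" where
  "S_m phi m = {f. \<exists>\<beta>. f = (\<lambda>z. \<Sum>j\<in>m. \<beta> j * phi j z)}"

definition Linf :: "nat \<Rightarrow> (nat \<Rightarrow> 'x) \<Rightarrow> real \<Rightarrow> ('x \<Rightarrow> real) set" where
  "Linf n x C0 = {f. \<forall>i<n. \<bar>f (x i)\<bar> \<le> C0}"

definition D_m :: "(nat \<Rightarrow> 'x \<Rightarrow> real) \<Rightarrow> nat set \<Rightarrow> nat" where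
  "D_m phi m = vector_space.dim (\<lambda>c (f::'x \<Rightarrow> real). (\<lambda>z. c * f z))
                 (phi ` m)"

end

theory Submission
  imports Defs
begin

lemma vs_fun: "vector_space (\<lambda>c (f::'x \<Rightarrow> real). (\<lambda>z. c * f z))"
  by unfold_locales (auto simp: fun_eq_iff algebra_simps)

lemma sum_fun_apply: "finite A \<Longrightarrow> (\<Sum>a\<in>A. (f a :: 'x \<Rightarrow> real)) z = (\<Sum>a\<in>A. f a z)"
  by (induction A rule: finite_induct) auto

lemma card_le_D_m:
  fixes phi :: "nat \<Rightarrow> 'x \<Rightarrow> real"
  assumes n: "n > 0"
    and orth: "\<forall>j\<in>{1..M}. \<forall>k\<in>{1..M}. inner_n n x (phi j) (phi k) = (if j = k then 1 else 0)"
    and m: "m \<subseteq> {1..M}"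
  shows "card m \<le> D_m phi m"
proof -
  interpret V: vector_space "\<lambda>c (f::'x \<Rightarrow> real). (\<lambda>z. c * f z)" by (rule vs_fun)
  have fm: "finite m" using m finite_subset by blast
  have inj: "inj_on phi m"
  proof (rule inj_onI)
    fix j k assume "j \<in> m" "k \<in> m" "phi j = phi k"
    then show "j = k" using orth m
      by (metis (no_types, lifting) one_neq_zero subsetD)
  qed
  have indep: "\<not> V.dependent (phi ` m)"
  proof
    assume "V.dependent (phi ` m)"
    then obtain u where u: "\<exists>v\<in>phi ` m. u v \<noteq> 0"
      and s: "(\<Sum>v\<in>phi ` m. (\<lambda>z. u v * v z)) = 0"
      using V.dependent_finite fm by blast
    obtain k where k: "k \<in> m" "u (phi k) \<noteq> 0" using u by blast
    have s2: "(\<Sum>j\<in>m. u (phi j) * phi j z) = 0" for z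
    proof -
      have "(\<Sum>v\<in>phi ` m. (\<lambda>z. u v * v z)) z = 0" using s by simp
      then have "(\<Sum>v\<in>phi ` m. u v * v z) = 0" using fm by (simp add: sum_fun_apply)
      then show ?thesis using sum.reindex[OF inj, of "\<lambda>v. u v * v z"] by simp
    qed
    have "0 = (\<Sum>i<n. (\<Sum>j\<in>m. u (phi j) * phi j (x i)) * phi k (x i))"
      using s2 by simp
    also have "\<dots> = (\<Sum>j\<in>m. u (phi j) * (\<Sum>i<n. phi j (x i) * phi k (x i)))"
      by (simp add: sum_distrib_left sum_distrib_right sum.swap[of _ m] mult.assoc)
    also have "\<dots> = (\<Sum>j\<in>m. u (phi j) * (if j = k then real n else 0))"
    proof (rule sum.cong[OF refl])
      fix j assume j: "j \<in> m"
      have "inner_n n x (phi j) (phi k) = (if j = k then 1 else 0)" using orth m j k by blast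
      then have "(\<Sum>i<n. phi j (x i) * phi k (x i)) = (if j = k then real n else 0)"
        using n by (auto simp: inner_n_def field_simps split: if_splits)
      then show "u (phi j) * (\<Sum>i<n. phi j (x i) * phi k (x i)) = u (phi j) * (if j = k then real n else 0)" by simp
    qed
    also have "\<dots> = u (phi k) * real n" using k fm by (simp add: if_distrib sum.delta cong: if_cong)
    finally show False using k n by simp
  qed
  have "D_m phi m = card (phi ` m)"
    unfolding D_m_def by (rule V.dim_eq_card_independent[OF indep])
  then show ?thesis using card_image[OF inj] by simp
qed


lemma U_bound:
  fixes z C :: real assumes "\<bar>z\<bar> \<le> C"
  shows "exp C / (1 + exp C)^2 \<le> exp z / (1 + exp z)^2"
proof -
  define u E where "u = exp z" and "E = exp C"
  have u0: "u > 0" "E > 0" by (auto simp: u_def E_def)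
  have "u \<le> E" unfolding u_def E_def using assms by simp
  moreover have "u * E \<ge> 1"
  proof -
    have "exp z * exp C = exp (z + C)" by (simp add: exp_add)
    also have "\<dots> \<ge> 1" using assms by simp
    finally show ?thesis by (simp add: u_def E_def)
  qed
  ultimately have "(E - u) * (u * E - 1) \<ge> 0" by simp
  then have "E * (1 + u)^2 \<le> u * (1 + E)^2" by (simp add: power2_eq_square algebra_simps)
  then show ?thesis using u0 unfolding u_def[symmetric] E_def[symmetric]
    by (simp add: divide_simps)
qed

lemma pi_deriv: "((\<lambda>t. exp t / (1 + exp t)) has_real_derivative exp t / (1 + exp t)^2) (at t)"
proof -
  have p: "1 + exp t \<noteq> 0" by (metis add_pos_pos exp_gt_zero less_irrefl zero_less_one)
  show ?thesis
    by (rule derivative_eq_intros refl | use p in \<open>simp add: field_simps power2_eq_square\<close>)+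
qed

lemma pi_incr:
  fixes C x y :: real
  assumes "\<bar>x\<bar> \<le> C" "\<bar>y\<bar> \<le> C" "x \<le> y"
  shows "exp C / (1 + exp C)^2 * (y - x) \<le> exp y / (1 + exp y) - exp x / (1 + exp x)"
proof (cases "x = y")
  case True then show ?thesis by simp
next
  case False
  then have "x < y" using assms by simp
  from MVT2[OF this, of "\<lambda>t. exp t / (1 + exp t)" "\<lambda>t. exp t / (1 + exp t)^2"] pi_deriv
  obtain z where z: "x < z" "z < y" "exp y / (1 + exp y) - exp x / (1 + exp x) = (y - x) * (exp z / (1 + exp z)^2)"
    by blast
  have "\<bar>z\<bar> \<le> C" using z assms by auto
  from U_bound[OF this] have "exp C / (1 + exp C)^2 * (y - x) \<le> (exp z / (1 + exp z)^2) * (y - x)"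
    using \<open>x < y\<close> by (intro mult_right_mono) auto
  then show ?thesis using z by (simp add: mult.commute)
qed

lemma ell_deriv: "((\<lambda>t. ln (1 + exp t)) has_real_derivative exp t / (1 + exp t)) (at t)"
proof -
  have p: "1 + exp t > 0" by (simp add: add_pos_pos)
  show ?thesis
    by (rule derivative_eq_intros refl | use p in \<open>simp add: field_simps\<close>)+
qed

lemma ell_strong:
  fixes a b C :: real
  assumes a: "\<bar>a\<bar> \<le> C" and b: "\<bar>b\<bar> \<le> C"
  shows "ln (1 + exp ((a + b) / 2)) \<le> (ln (1 + exp a) + ln (1 + exp b)) / 2
            - exp C / (1 + exp C)^2 / 8 * (a - b)^2"
proof -
  define U where "U = exp C / (1 + exp C)^2"
  define g where "g t = ln (1 + exp t) - U * t^2 / 2" for t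
  have cv: "convex_on {-C..C} g"
  proof (rule convex_on_realI[where f' = "\<lambda>t. exp t / (1 + exp t) - U * t"])
    show "connected {-C..C}" by simp
    fix t show "(g has_real_derivative exp t / (1 + exp t) - U * t) (at t)"
      unfolding g_def
      by (rule derivative_eq_intros ell_deriv refl | simp)+
  next
    fix s t :: real assume "s \<in> {-C..C}" "t \<in> {-C..C}" "s \<le> t"
    then have "U * (t - s) \<le> exp t / (1 + exp t) - exp s / (1 + exp s)"
      unfolding U_def by (intro pi_incr) auto
    then show "exp s / (1 + exp s) - U * s \<le> exp t / (1 + exp t) - U * t"
      by (simp add: algebra_simps)
  qed
  have "g ((1 - 1/2) *\<^sub>R a + (1/2) *\<^sub>R b) \<le> (1 - 1/2) * g a + (1/2) * g b"
    by (rule convex_onD[OF cv]) (use a b in auto)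
  then have "g ((a + b) / 2) \<le> (g a + g b) / 2" by (simp add: field_simps)
  then show ?thesis unfolding g_def U_def[symmetric]
    by (simp add: power2_eq_square field_simps)
qed


lemma pi_l_pos: "0 < pi_l t" by (simp add: pi_l_def add_pos_pos)
lemma pi_l_lt1: "pi_l t < 1" by (simp add: pi_l_def add_pos_pos)

lemma probY_nonneg: "probY n x f Y \<ge> 0"
  unfolding probY_def using pi_l_pos pi_l_lt1
  by (intro prod_nonneg) (auto simp: less_imp_le)

lemma outcomes_finite: "finite (outcomes n)"
  unfolding outcomes_def by (intro finite_PiE) auto

lemma expect_sum: "expect n x f (\<lambda>Y. \<Sum>a\<in>A. h a Y) = (\<Sum>a\<in>A. expect n x f (h a))"
  unfolding expect_def by (simp add: sum_distrib_left sum.swap[of _ A])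

lemma expect_cmult: "expect n x f (\<lambda>Y. c * h Y) = c * expect n x f h"
  unfolding expect_def by (simp add: sum_distrib_left algebra_simps)

lemma expect_add: "expect n x f (\<lambda>Y. h Y + g Y) = expect n x f h + expect n x f g"
  unfolding expect_def by (simp add: sum.distrib algebra_simps)

lemma expect_mono: "(\<And>Y. Y \<in> outcomes n \<Longrightarrow> h Y \<le> g Y) \<Longrightarrow> expect n x f h \<le> expect n x f g"
  unfolding expect_def by (intro sum_mono mult_left_mono probY_nonneg) auto

lemma expect_prod:
  "expect n x f (\<lambda>Y. \<Prod>i<n. q i (Y i))
     = (\<Prod>i<n. pi_l (f (x i)) * q i 1 + (1 - pi_l (f (x i))) * q i 0)"
proof -
  have "expect n x f (\<lambda>Y. \<Prod>i<n. q i (Y i))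
     = (\<Sum>Y\<in>PiE {..<n} (\<lambda>_. {0::real,1}). \<Prod>i<n. (if Y i = 1 then pi_l (f (x i)) else 1 - pi_l (f (x i))) * q i (Y i))"
    unfolding expect_def probY_def outcomes_def by (simp add: prod.distrib)
  also have "\<dots> = (\<Prod>i<n. \<Sum>y\<in>{0::real,1}. (if y = 1 then pi_l (f (x i)) else 1 - pi_l (f (x i))) * q i y)"
    by (rule prod_sum_PiE[symmetric]) auto
  also have "\<dots> = (\<Prod>i<n. pi_l (f (x i)) * q i 1 + (1 - pi_l (f (x i))) * q i 0)"
    by (simp add: algebra_simps)
  finally show ?thesis .
qed

lemma expect_const: "expect n x f (\<lambda>Y. c) = c"
proof -
  have "expect n x f (\<lambda>Y. (\<Prod>i<n. (\<lambda>_. 1::real) (Y i))) = 1"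
    using expect_prod[of n x f "\<lambda>i y. 1"] by simp
  then have "expect n x f (\<lambda>Y. 1) = 1" by simp
  then show ?thesis using expect_cmult[of n x f c "\<lambda>Y. 1"] by simp
qed

lemma expect_cov:
  assumes "i < n" "k < n"
  shows "expect n x f (\<lambda>Y. (Y i - pi_l (f (x i))) * (Y k - pi_l (f (x k))))
    = (if i = k then pi_l (f (x i)) * (1 - pi_l (f (x i))) else 0)"
proof (cases "i = k")
  case True
  define p where "p = pi_l (f (x i))"
  let ?q = "\<lambda>l (y::real). if l = i then (y - p)^2 else 1"
  have "(\<Prod>l<n. ?q l (Y l)) = (Y i - p)^2" for Y
  proof -
    have "(\<Prod>l<n. ?q l (Y l)) = (\<Prod>l\<in>{i}. ?q l (Y l))"
      by (rule prod.mono_neutral_right) (use assms in auto)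
    then show ?thesis by simp
  qed
  then have "expect n x f (\<lambda>Y. (Y i - p)^2) = (\<Prod>l<n. pi_l (f (x l)) * ?q l 1 + (1 - pi_l (f (x l))) * ?q l 0)"
    using expect_prod[of n x f ?q] by simp
  also have "\<dots> = (\<Prod>l\<in>{i}. pi_l (f (x l)) * ?q l 1 + (1 - pi_l (f (x l))) * ?q l 0)"
    by (rule prod.mono_neutral_right) (use assms in auto)
  also have "\<dots> = p * (1 - p)" by (simp add: p_def[symmetric] power2_eq_square algebra_simps)
  finally show ?thesis using True by (simp add: p_def power2_eq_square)
next
  case False
  define p where "p = pi_l (f (x i))"
  define r where "r = pi_l (f (x k))"
  let ?q = "\<lambda>l (y::real). if l = i then y - p else if l = k then y - r else 1"
  have "(\<Prod>l<n. ?q l (Y l)) = (Y i - p) * (Y k - r)" for Y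
  proof -
    have "(\<Prod>l<n. ?q l (Y l)) = (\<Prod>l\<in>{i,k}. ?q l (Y l))"
      by (rule prod.mono_neutral_right) (use assms in auto)
    then show ?thesis using False by simp
  qed
  then have "expect n x f (\<lambda>Y. (Y i - p) * (Y k - r)) = (\<Prod>l<n. pi_l (f (x l)) * ?q l 1 + (1 - pi_l (f (x l))) * ?q l 0)"
    using expect_prod[of n x f ?q] by simp
  also have "\<dots> = 0"
  proof -
    have "pi_l (f (x i)) * ?q i 1 + (1 - pi_l (f (x i))) * ?q i 0 = 0"
      by (simp add: p_def algebra_simps)
    then show ?thesis using assms by (intro prod_zero) auto
  qed
  finally show ?thesis using False by (simp add: p_def r_def)
qed

lemma expect_sq_le:
  fixes c :: "nat \<Rightarrow> real"
  shows "expect n x f (\<lambda>Y. (\<Sum>i<n. (Y i - pi_l (f (x i))) * c i)^2) \<le> (\<Sum>i<n. (c i)^2)"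
proof -
  let ?e = "\<lambda>Y i. Y i - pi_l (f (x i))"
  have "expect n x f (\<lambda>Y. (\<Sum>i<n. ?e Y i * c i)^2)
      = expect n x f (\<lambda>Y. \<Sum>i<n. \<Sum>k<n. (c i * c k) * (?e Y i * ?e Y k))"
    by (simp add: power2_eq_square sum_product algebra_simps)
  also have "\<dots> = (\<Sum>i<n. \<Sum>k<n. (c i * c k) * (if i = k then pi_l (f (x i)) * (1 - pi_l (f (x i))) else 0))"
    by (simp add: expect_sum expect_cmult expect_cov)
  also have "\<dots> = (\<Sum>i<n. (c i)^2 * (pi_l (f (x i)) * (1 - pi_l (f (x i)))))"
    by (simp add: if_distrib power2_eq_square cong: if_cong)
  also have "\<dots> \<le> (\<Sum>i<n. (c i)^2)"
  proof (rule sum_mono)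
    fix i
    have "pi_l (f (x i)) * (1 - pi_l (f (x i))) \<le> 1"
      using pi_l_pos[of "f (x i)"] pi_l_lt1[of "f (x i)"]
      by (intro mult_le_one) auto
    then show "(c i)^2 * (pi_l (f (x i)) * (1 - pi_l (f (x i)))) \<le> (c i)^2"
      by (metis mult.right_neutral mult_left_mono zero_le_power2)
  qed
  finally show ?thesis .
qed


lemma KL_term:
  fixes p t :: real assumes "0 < p" "p < 1"
  shows "p * ln (p / pi_l t) + (1 - p) * ln ((1 - p) / (1 - pi_l t))
       = (p * ln p + (1 - p) * ln (1 - p)) + (ln (1 + exp t) - p * t)"
proof -
  have e: "1 + exp t > 0" by (simp add: add_pos_pos)
  have pl: "pi_l t = exp t / (1 + exp t)" by (simp add: pi_l_def)
  have ml: "1 - pi_l t = 1 / (1 + exp t)" using e by (simp add: pi_l_def field_simps)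
  have l1: "ln (p / pi_l t) = ln p - t + ln (1 + exp t)"
    using assms e by (simp add: pl ln_div ln_mult)
  have l2: "ln ((1 - p) / (1 - pi_l t)) = ln (1 - p) + ln (1 + exp t)"
    using assms e by (simp add: ml ln_div ln_mult)
  show ?thesis by (simp add: l1 l2 algebra_simps)
qed

lemma KL_alt:
  "KL n x f0 f = (1 / real n) * (\<Sum>i<n. pi_l (f0 (x i)) * ln (pi_l (f0 (x i))) + (1 - pi_l (f0 (x i))) * ln (1 - pi_l (f0 (x i))))
     + (1 / real n) * (\<Sum>i<n. ln (1 + exp (f (x i))) - pi_l (f0 (x i)) * f (x i))"
proof -
  have p: "0 < pi_l t" "pi_l t < 1" for t by (simp_all add: pi_l_def add_pos_pos)
  show ?thesis unfolding KL_def
    by (simp add: KL_term[OF p] sum.distrib distrib_left)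
qed


theorem proposition3p1:
  fixes n M :: nat and x :: "nat \<Rightarrow> 'x" and f0 :: "'x \<Rightarrow> real"
    and phi :: "nat \<Rightarrow> 'x \<Rightarrow> real" and m :: "nat set" and C0 :: real
    and fhat :: "(nat \<Rightarrow> real) \<Rightarrow> 'x \<Rightarrow> real" and fm :: "'x \<Rightarrow> real"
  assumes "n > 0"
    and orth: "\<forall>j\<in>{1..M}. \<forall>k\<in>{1..M}. inner_n n x (phi j) (phi k) = (if j = k then 1 else 0)"
    and "m \<subseteq> {1..M}"
    and "C0 > 0"
    and fhat_mem: "\<forall>Y\<in>outcomes n. fhat Y \<in> S_m phi m \<inter> Linf n x C0"
    and fhat_min: "\<forall>Y\<in>outcomes n. \<forall>t\<in>S_m phi m \<inter> Linf n x C0.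
                     gamma_n n x Y (fhat Y) \<le> gamma_n n x Y t"
    and fm_mem: "fm \<in> S_m phi m \<inter> Linf n x C0"
    and fm_min: "\<forall>t\<in>S_m phi m \<inter> Linf n x C0. gamma n x f0 fm \<le> gamma n x f0 t"
  shows "expect n x f0 (\<lambda>Y. KL n x f0 (fhat Y))
           \<le> KL n x f0 fm
             + real (D_m phi m) / (2 * real n * (exp C0 / (1 + exp C0)^2)^2)"
proof -
  note n = \<open>n > 0\<close> and msub = \<open>m \<subseteq> {1..M}\<close>
  have finm: "finite m" using msub finite_subset by blast
  define U where "U = exp C0 / (1 + exp C0)^2"
  have U0: "U > 0" unfolding U_def using exp_gt_zero[of C0] by (intro divide_pos_pos zero_less_power; linarith)
  have U2: "2 * U \<le> 1"
  proof -
    have "2 * exp C0 \<le> (1 + exp C0)^2"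
      by (simp add: power2_eq_square algebra_simps)
    then show ?thesis unfolding U_def by (simp add: divide_simps add_pos_pos)
  qed
  define p where "p i = pi_l (f0 (x i))" for i
  define E where "E Y j = (\<Sum>i<n. (Y i - p i) * phi j (x i))" for Y :: "nat \<Rightarrow> real" and j
  define K where "K = 1 / (U * real n ^ 2)"
  have nn: "(\<Sum>i<n. phi j (x i) * phi k (x i)) = (if j = k then real n else 0)"
    if "j \<in> m" "k \<in> m" for j k
  proof -
    have "inner_n n x (phi j) (phi k) = (if j = k then 1 else 0)" using orth msub that by blast
    then show ?thesis using n by (auto simp: inner_n_def field_simps split: if_splits)
  qed
  have pw: "KL n x f0 (fhat Y) \<le> KL n x f0 fm + K * (\<Sum>j\<in>m. (E Y j)^2)" if Y: "Y \<in> outcomes n" for Y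
  proof -
    obtain \<beta> where hb: "fhat Y = (\<lambda>z. \<Sum>j\<in>m. \<beta> j * phi j z)"
      using fhat_mem Y unfolding S_m_def by blast
    obtain \<gamma> where hg: "fm = (\<lambda>z. \<Sum>j\<in>m. \<gamma> j * phi j z)"
      using fm_mem unfolding S_m_def by blast
    define a where "a i = fhat Y (x i)" for i
    define b where "b i = fm (x i)" for i
    have aC: "\<bar>a i\<bar> \<le> C0" if "i < n" for i using fhat_mem Y that unfolding a_def Linf_def by blast
    have bC: "\<bar>b i\<bar> \<le> C0" if "i < n" for i using fm_mem that unfolding b_def Linf_def by blast
    define h where "h = (\<lambda>z. \<Sum>j\<in>m. ((\<beta> j + \<gamma> j) / 2) * phi j z)"
    have hx: "h (x i) = (a i + b i) / 2" for i
      unfolding h_def a_def b_def hb hg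
      by (simp add: sum_divide_distrib sum.distrib[symmetric] algebra_simps add_divide_distrib)
    have hmem: "h \<in> S_m phi m \<inter> Linf n x C0"
    proof
      show "h \<in> S_m phi m" unfolding S_m_def h_def by (rule CollectI, rule exI[of _ "\<lambda>j. (\<beta> j + \<gamma> j) / 2"]) (rule refl)
      show "h \<in> Linf n x C0" unfolding Linf_def
      proof (safe)
        fix i assume "i < n"
        then show "\<bar>h (x i)\<bar> \<le> C0" using aC[of i] bC[of i] by (simp add: hx abs_le_iff)
      qed
    qed
    define F where "F t = (\<Sum>i<n. ln (1 + exp (t i)) - Y i * t i)" for t :: "nat \<Rightarrow> real"
    define G where "G t = (\<Sum>i<n. ln (1 + exp (t i)) - p i * t i)" for t :: "nat \<Rightarrow> real"
    define Q where "Q = (\<Sum>i<n. (a i - b i)^2)"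
    have "gamma_n n x Y (fhat Y) \<le> gamma_n n x Y h" using fhat_min Y hmem by blast
    moreover have "gamma_n n x Y (fhat Y) = F a / real n" unfolding gamma_n_def F_def a_def by simp
    moreover have "gamma_n n x Y h = F (\<lambda>i. (a i + b i) / 2) / real n" unfolding gamma_n_def F_def hx by simp
    ultimately have Fah: "F a \<le> F (\<lambda>i. (a i + b i) / 2)"
      using n by (simp add: divide_right_mono_neg divide_le_cancel)
    have Fh: "F (\<lambda>i. (a i + b i) / 2) \<le> (F a + F b) / 2 - U / 8 * Q"
    proof -
      have "F (\<lambda>i. (a i + b i) / 2) \<le> (\<Sum>i<n. ((ln (1 + exp (a i)) + ln (1 + exp (b i))) / 2 - U / 8 * (a i - b i)^2) - Y i * ((a i + b i) / 2))"
        unfolding F_def U_def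
        by (intro sum_mono diff_right_mono ell_strong) (auto intro: aC bC)
      also have "\<dots> = (\<Sum>i<n. (ln (1 + exp (a i)) - Y i * a i) / 2 + (ln (1 + exp (b i)) - Y i * b i) / 2 - U / 8 * (a i - b i)^2)"
        by (rule sum.cong) (simp_all add: field_simps)
      also have "\<dots> = (F a + F b) / 2 - U / 8 * Q"
        unfolding F_def Q_def
        by (simp add: sum.distrib sum_subtractf sum_divide_distrib[symmetric] sum_distrib_left, simp add: field_simps)
      finally show ?thesis .
    qed
    have FQ: "F a \<le> F b - U / 4 * Q" using Fah Fh by (simp add: field_simps)
    define c where "c j = \<beta> j - \<gamma> j" for j
    have abc: "a i - b i = (\<Sum>j\<in>m. c j * phi j (x i))" for i
      unfolding a_def b_def hb hg c_def by (simp add: sum_subtractf[symmetric] algebra_simps)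
    have GF: "G a - G b = F a - F b + (\<Sum>j\<in>m. c j * E Y j)"
    proof -
      have "G a - G b = F a - F b + (\<Sum>i<n. (Y i - p i) * (a i - b i))"
        unfolding G_def F_def by (simp add: sum_subtractf[symmetric] sum.distrib[symmetric] algebra_simps)
      also have "(\<Sum>i<n. (Y i - p i) * (a i - b i)) = (\<Sum>j\<in>m. c j * E Y j)"
        unfolding abc E_def by (simp add: sum_distrib_left sum.swap[of _ m] algebra_simps)
      finally show ?thesis .
    qed
    have Qc: "Q = real n * (\<Sum>j\<in>m. (c j)^2)"
    proof -
      have "Q = (\<Sum>j\<in>m. \<Sum>k\<in>m. c j * c k * (\<Sum>i<n. phi j (x i) * phi k (x i)))"
        unfolding Q_def abc power2_eq_square
        by (simp add: sum_product sum_distrib_left sum.swap[of _ "{..<n}"] algebra_simps)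
      also have "\<dots> = (\<Sum>j\<in>m. \<Sum>k\<in>m. c j * c k * (if j = k then real n else 0))"
        by (intro sum.cong refl) (simp add: nn)
      also have "\<dots> = real n * (\<Sum>j\<in>m. (c j)^2)"
        using finm by (simp add: if_distrib sum_distrib_left power2_eq_square algebra_simps cong: if_cong)
      finally show ?thesis .
    qed
    have amgm: "c j * E Y j \<le> U * real n / 4 * (c j)^2 + (E Y j)^2 / (U * real n)" for j
    proof -
      define \<alpha> where "\<alpha> = U * real n / 4"
      have al: "\<alpha> > 0" using U0 n by (simp add: \<alpha>_def)
      have "0 \<le> (\<alpha> * c j - E Y j / 2)^2" by simp
      then have h1: "\<alpha> * (c j * E Y j) \<le> \<alpha>^2 * (c j)^2 + (E Y j)^2 / 4"
        by (simp add: power2_eq_square algebra_simps)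
      have h2: "\<alpha> * (\<alpha> * (c j)^2 + (E Y j)^2 / (4 * \<alpha>)) = \<alpha>^2 * (c j)^2 + (E Y j)^2 / 4"
        using al by (simp add: field_simps power2_eq_square)
      have "\<alpha> * (c j * E Y j) \<le> \<alpha> * (\<alpha> * (c j)^2 + (E Y j)^2 / (4 * \<alpha>))"
        using h1 h2 by simp
      then have "c j * E Y j \<le> \<alpha> * (c j)^2 + (E Y j)^2 / (4 * \<alpha>)"
        using al by (simp add: mult_le_cancel_left_pos)
      then show ?thesis by (simp add: \<alpha>_def)
    qed
    have "G a - G b \<le> (\<Sum>j\<in>m. (E Y j)^2) / (U * real n)"
    proof -
      have "(\<Sum>j\<in>m. c j * E Y j) \<le> (\<Sum>j\<in>m. U * real n / 4 * (c j)^2 + (E Y j)^2 / (U * real n))"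
        by (intro sum_mono amgm)
      also have "\<dots> = U / 4 * Q + (\<Sum>j\<in>m. (E Y j)^2) / (U * real n)"
        by (simp add: Qc sum.distrib sum_distrib_left sum_divide_distrib algebra_simps)
      finally show ?thesis using GF FQ by simp
    qed
    moreover have "KL n x f0 (fhat Y) - KL n x f0 fm = (G a - G b) / real n"
      unfolding KL_alt G_def a_def b_def p_def by (simp add: divide_simps)
    ultimately have "KL n x f0 (fhat Y) - KL n x f0 fm \<le> (\<Sum>j\<in>m. (E Y j)^2) / (U * real n) / real n"
      using n divide_right_mono[of "G a - G b" "(\<Sum>j\<in>m. (E Y j)^2) / (U * real n)" "real n"] by simp
    then show ?thesis unfolding K_def by (simp add: power2_eq_square field_simps)
  qed
  have "expect n x f0 (\<lambda>Y. KL n x f0 (fhat Y)) \<le> expect n x f0 (\<lambda>Y. KL n x f0 fm + K * (\<Sum>j\<in>m. (E Y j)^2))"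
    by (rule expect_mono) (rule pw)
  also have "\<dots> = KL n x f0 fm + K * (\<Sum>j\<in>m. expect n x f0 (\<lambda>Y. (E Y j)^2))"
    by (simp add: expect_add expect_const expect_cmult expect_sum)
  also have "\<dots> \<le> KL n x f0 fm + K * (\<Sum>j\<in>m. real n)"
  proof -
    have "expect n x f0 (\<lambda>Y. (E Y j)^2) \<le> real n" if "j \<in> m" for j
    proof -
      have "expect n x f0 (\<lambda>Y. (E Y j)^2) \<le> (\<Sum>i<n. (phi j (x i))^2)"
        unfolding E_def p_def by (rule expect_sq_le)
      also have "\<dots> = real n" using nn[OF that that] by (simp add: power2_eq_square)
      finally show ?thesis .
    qed
    moreover have "K \<ge> 0" unfolding K_def using U0 by simp
    ultimately show ?thesis by (intro add_left_mono mult_left_mono sum_mono) auto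
  qed
  also have "\<dots> = KL n x f0 fm + real (card m) / (U * real n)"
    unfolding K_def using n by (simp add: power2_eq_square)
  also have "\<dots> \<le> KL n x f0 fm + real (D_m phi m) / (2 * real n * U^2)"
  proof -
    have cD: "real (card m) \<le> real (D_m phi m)" using card_le_D_m[OF n orth msub] by simp
    have "real (card m) / (U * real n) = real (card m) * (2 * U) / (2 * real n * U^2)"
      using U0 n by (simp add: power2_eq_square field_simps)
    also have "\<dots> \<le> real (D_m phi m) / (2 * real n * U^2)"
      using U0 n U2 cD
      by (intro divide_right_mono) (auto intro: mult_le_one order_trans[OF mult_right_le_one_le] simp: mult_le_cancel_left1)
    finally show ?thesis by simp
  qed
  finally show ?thesis unfolding U_def .
qed

end
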